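(* Let $\mathbf{C}$ be the Cantor set with a fixed compatible metric $\mathrm{dist}$, let $X \subset \mathbf{C}$, and let $f : X \to Y$ be a continuous clopen-LC function from $X$ onto $Y \subset \mathbf{C}$ such that $f^{-1}(y)$ is compact for every $y \in Y$. For $n = 1,2,\dots$, let $X_n$ be the union of all fibers $f^{-1}(y)$, $y \in Y$, for which there exist a sequence $y_k \to y$ in $Y$ with $y_k \neq y$ for all $k$ and $y_k \neq y_j$ for $k\ne j$, points $x_k \in f^{-1}(y_k)$, and a point $\tilde{x}_y \in \mathbf{C}$ with $x_k \to \tilde{x}_y$ and $\mathrm{dist}(\tilde{x}_y, f^{-1}(y)) > 1/n$; let $Y_n = f(X_n)$. Then for every $n \ge 1$ the restriction $g_n = f|_{f^{-1}(\mathrm{cl}_Y Y_n)} : f^{-1}(\mathrm{cl}_Y Y_n) \to \mathrm{cl}_Y Y_n$ is an open function.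
   Context: A subset of a topological space is an LC-set if it is the intersection of an open set and a closed set. A function is open if it maps open sets to open sets of its image space. A function $f : X \to Y$ is clopen-LC if for every subset $U \subset X$ that is clopen in $X$, the image $f(U)$ is an LC-set in $Y$. $\mathrm{cl}_Y$ denotes closure in $Y$. *)

theory Defs
  imports "HOL-Analysis.Analysis"
begin

definition cantor_set :: "real set" where
  "cantor_set = range (\<lambda>d::nat \<Rightarrow> bool. \<Sum>i. (if d i then 2 else 0) / 3 ^ Suc i)"

definition lc_set :: "'a topology \<Rightarrow> 'a set \<Rightarrow> bool" where
  "lc_set T S \<longleftrightarrow> (\<exists>V F. openin T V \<and> closedin T F \<and> S = V \<inter> F)"

definition clopen_LC :: "'a topology \<Rightarrow> 'b topology \<Rightarrow> ('a \<Rightarrow> 'b) \<Rightarrow> bool" where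
  "clopen_LC TX TY f \<longleftrightarrow>
     (\<forall>U. openin TX U \<and> closedin TX U \<longrightarrow> lc_set TY (f ` U))"

definition bad_part :: "'a::metric_space set \<Rightarrow> 'a set \<Rightarrow> 'a set \<Rightarrow> ('a \<Rightarrow> 'a) \<Rightarrow> nat \<Rightarrow> 'a set" where
  "bad_part C X Y f n = (\<Union>y \<in> {y \<in> Y. \<exists>yk xk xt.
        (\<forall>k. yk k \<in> Y \<and> yk k \<noteq> y) \<and> inj yk \<and> yk \<longlonglongrightarrow> y \<and>
        (\<forall>k. xk k \<in> X \<and> f (xk k) = yk k) \<and>
        xt \<in> C \<and> xk \<longlonglongrightarrow> xt \<and>
        infdist xt {x \<in> X. f x = y} > 1 / real n}. {x \<in> X. f x = y})"

end

theory Submission imports Defs begin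

definition cd :: "(nat \<Rightarrow> bool) \<Rightarrow> nat \<Rightarrow> real" where
  "cd d i = (if d i then 2 else 0) / 3 ^ Suc i"

definition phi :: "(nat \<Rightarrow> bool) \<Rightarrow> real" where
  "phi d = (\<Sum>i. cd d i)"

lemma geo_tail: "summable (\<lambda>j. 2 / 3 ^ (j + k + 1) :: real) \<and> (\<Sum>j. 2 / 3 ^ (j + k + 1) :: real) = 1 / 3 ^ k"
proof -
  have eq: "(\<lambda>j. 2 / 3 ^ (j + k + 1) :: real) = (\<lambda>j. (2 / 3 ^ (k + 1)) * (1/3) ^ j)"
    by (auto simp: power_add power_divide field_simps)
  have s: "summable (\<lambda>j. (1/3::real) ^ j)" by (rule summable_geometric) simp
  have "(\<Sum>j. (2 / 3 ^ (k + 1)) * (1/3::real) ^ j) = (2 / 3 ^ (k + 1)) * (\<Sum>j. (1/3::real) ^ j)"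
    using s by (rule suminf_mult)
  also have "\<dots> = 1 / 3 ^ k" by (simp add: suminf_geometric)
  finally show ?thesis unfolding eq using summable_mult[OF s] by simp
qed

lemma cd_bounds: "0 \<le> cd d i" "cd d i \<le> 2 / 3 ^ Suc i"
  by (auto simp: cd_def)

lemma cd_summable: "summable (cd d)"
proof (rule summable_comparison_test')
  show "summable (\<lambda>j. 2 / 3 ^ (j + 0 + 1) :: real)" using geo_tail[of 0] by blast
  show "norm (cd d n) \<le> 2 / 3 ^ (n + 0 + 1)" for n using cd_bounds[of d n] by simp
qed

lemma tail_bound:
  "\<bar>\<Sum>j. cd e (j + k) - cd d (j + k)\<bar> \<le> 1 / 3 ^ k"
proof -
  have "norm (\<Sum>j. cd e (j + k) - cd d (j + k)) \<le> (\<Sum>j. 2 / 3 ^ (j + k + 1))"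
  proof (rule norm_suminf_le)
    show "summable (\<lambda>j. 2 / 3 ^ (j + k + 1) :: real)" using geo_tail by blast
    show "norm (cd e (j + k) - cd d (j + k)) \<le> 2 / 3 ^ (j + k + 1)" for j
      using cd_bounds[of e "j+k"] cd_bounds[of d "j+k"] by auto
  qed
  then show ?thesis using geo_tail[of k] by simp
qed

lemma phi_diff: assumes "\<forall>i<k. e i = d i"
  shows "phi e - phi d = (\<Sum>j. cd e (j + k) - cd d (j + k))"
proof -
  have s: "summable (\<lambda>i. cd e i - cd d i)" by (intro summable_diff cd_summable)
  have "phi e - phi d = (\<Sum>i. cd e i - cd d i)"
    unfolding phi_def by (intro suminf_diff cd_summable)
  also have "\<dots> = (\<Sum>j. cd e (j + k) - cd d (j + k)) + (\<Sum>i<k. cd e i - cd d i)"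
    using suminf_split_initial_segment[OF s, of k] by simp
  also have "(\<Sum>i<k. cd e i - cd d i) = 0"
    using assms by (auto simp: cd_def)
  finally show ?thesis by simp
qed

lemma phi_close: assumes "\<forall>i<k. e i = d i" shows "\<bar>phi e - phi d\<bar> \<le> 1 / 3 ^ k"
  using phi_diff[OF assms] tail_bound by simp

lemma phi_less: assumes "\<forall>i<k. e i = d i" and "e k" and "\<not> d k"
  shows "phi d < phi e"
proof -
  let ?g = "\<lambda>j. cd e (j + k) - cd d (j + k)"
  have s: "summable ?g"
    using summable_diff[OF cd_summable cd_summable, of e d]
      summable_iff_shift[of "\<lambda>i. cd e i - cd d i" k] by simp
  have "(\<Sum>j. ?g (Suc j)) = suminf ?g - ?g 0" by (rule suminf_split_head[OF s])
  moreover have "(\<Sum>j. ?g (Suc j)) = (\<Sum>j. cd e (j + Suc k) - cd d (j + Suc k))" by simp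
  moreover have "?g 0 = 2 / 3 ^ Suc k" using assms by (simp add: cd_def)
  ultimately have "suminf ?g = 2 / 3 ^ Suc k + (\<Sum>j. cd e (j + Suc k) - cd d (j + Suc k))" by simp
  moreover have "\<bar>\<Sum>j. cd e (j + Suc k) - cd d (j + Suc k)\<bar> \<le> 1 / 3 ^ Suc k" by (rule tail_bound)
  moreover have "(2::real) / 3 ^ Suc k = 2 * (1 / 3 ^ Suc k)" "(0::real) < 1 / 3 ^ Suc k" by simp_all
  ultimately have "suminf ?g > 0" by (simp only: abs_le_iff) linarith
  then show ?thesis using phi_diff[OF assms(1)] by simp
qed

lemma phi_inj: "inj phi"
proof (rule injI)
  fix d e assume eq: "phi d = phi e"
  show "d = e"
  proof (rule ccontr)
    assume "d \<noteq> e"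
    then have ex: "\<exists>i. d i \<noteq> e i" by auto
    define k where "k = (LEAST i. d i \<noteq> e i)"
    have k: "d k \<noteq> e k" unfolding k_def by (rule LeastI_ex[OF ex])
    have lt: "\<forall>i<k. e i = d i"
    proof (intro allI impI)
      fix i assume "i < k"
      then have "\<not> (d i \<noteq> e i)" unfolding k_def by (rule not_less_Least)
      then show "e i = d i" by simp
    qed
    have lt': "\<forall>i<k. d i = e i" using lt by simp
    show False
    proof (cases "e k")
      case True
      then have "\<not> d k" using k by simp
      then have "phi d < phi e" using phi_less[OF lt True] by blast
      then show ?thesis using eq by simp
    next
      case False
      then have "d k" using k by simp
      then have "phi e < phi d" using phi_less[OF lt' \<open>d k\<close> False] by blast
      then show ?thesis using eq by simp
    qed
  qed
qed

lemma cantor_eq: "cantor_set = range phi"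
  unfolding cantor_set_def phi_def cd_def by simp

lemma phi_cont: "continuous_on UNIV phi"
proof -
  have ul: "uniform_limit UNIV (\<lambda>n x. \<Sum>i<n. cd x i) (\<lambda>x. \<Sum>i. cd x i) sequentially"
  proof (rule Weierstrass_m_test)
    show "summable (\<lambda>j. 2 / 3 ^ (j + 0 + 1) :: real)" using geo_tail[of 0] by blast
    show "norm (cd x n) \<le> 2 / 3 ^ (n + 0 + 1)" for n x using cd_bounds[of x n] by simp
  qed
  have c: "continuous_on UNIV (\<lambda>x. cd x i)" for i
  proof -
    have "continuous_on UNIV (\<lambda>x::nat\<Rightarrow>bool. x i)" by simp
    moreover have "continuous_on UNIV (\<lambda>b::bool. (if b then 2 else 0) / 3 ^ Suc i :: real)" by simp
    ultimately have "continuous_on UNIV ((\<lambda>b::bool. (if b then 2 else 0) / 3 ^ Suc i :: real) \<circ> (\<lambda>x::nat\<Rightarrow>bool. x i))"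
      by (intro continuous_on_compose) auto
    then show ?thesis by (simp add: cd_def o_def)
  qed
  show ?thesis unfolding phi_def
    by (rule uniform_limit_theorem[OF _ ul]) (auto intro!: always_eventually continuous_on_sum c)
qed

lemma compact_cantor: "compact cantor_set"
proof -
  have "compact (UNIV :: (nat \<Rightarrow> bool) set)"
  proof -
    have "compact_space (product_topology (\<lambda>i::nat. euclidean :: bool topology) UNIV)"
      unfolding compact_space_product_topology
      by (simp add: compact_space_def finite_imp_compact)
    then have "compact_space (euclidean :: (nat \<Rightarrow> bool) topology)"
      by (simp only: euclidean_product_topology)
    then show ?thesis
      by (simp add: compact_space_def)
  qed
  then show ?thesis unfolding cantor_eq using phi_cont compact_continuous_image by blast
qed

lemma cyl_open_closed: "open {e::nat\<Rightarrow>bool. \<forall>i<k. e i = d i} \<and> closed {e::nat\<Rightarrow>bool. \<forall>i<k. e i = d i}"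
proof -
  have eq: "{e::nat\<Rightarrow>bool. \<forall>i<k. e i = d i} = (\<Inter>i\<in>{..<k}. (\<lambda>e. e i) -` {d i})" by auto
  have c: "continuous_on UNIV (\<lambda>e::nat\<Rightarrow>bool. e i)" for i by simp
  have o: "open ((\<lambda>e::nat\<Rightarrow>bool. e i) -` {d i})" for i by (rule open_vimage[OF open_discrete c])
  have cl: "closed ((\<lambda>e::nat\<Rightarrow>bool. e i) -` {d i})" for i by (rule closed_vimage[OF _ c]) simp
  show ?thesis unfolding eq using o cl by (auto intro!: open_INT closed_INT)
qed

lemma compact_UNIV_fun: "compact (UNIV :: (nat \<Rightarrow> bool) set)"
proof -
  have "compact_space (product_topology (\<lambda>i::nat. euclidean :: bool topology) UNIV)"
    unfolding compact_space_product_topology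
    by (simp add: compact_space_def finite_imp_compact)
  then have "compact_space (euclidean :: (nat \<Rightarrow> bool) topology)"
    by (simp only: euclidean_product_topology)
  then show ?thesis
    by (simp add: compact_space_def)
qed

lemma compact_phi_image: "closed A \<Longrightarrow> compact (phi ` (A :: (nat\<Rightarrow>bool) set))"
proof -
  assume "closed A"
  then have "compact A" using compact_UNIV_fun closed_Int_compact[of A UNIV] by simp
  then show ?thesis using continuous_on_subset[OF phi_cont] compact_continuous_image by blast
qed

lemma cantor_dim0: "top_of_set cantor_set dim_le 0"
  unfolding dimension_le_0_neighbourhood_base_of_clopen neighbourhood_base_of
proof (intro allI impI)
  fix W x assume "openin (top_of_set cantor_set) W \<and> x \<in> W"
  then have W: "openin (top_of_set cantor_set) W" and xW: "x \<in> W" by auto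
  then obtain \<epsilon> where e: "\<epsilon> > 0" and eW: "\<And>y. y \<in> cantor_set \<Longrightarrow> dist y x < \<epsilon> \<Longrightarrow> y \<in> W"
    by (force simp: openin_euclidean_subtopology_iff)
  have "x \<in> cantor_set" using W xW openin_imp_subset by blast
  then obtain d where xd: "x = phi d" unfolding cantor_eq by blast
  obtain k where k: "(1/3::real) ^ k < \<epsilon>" using real_arch_pow_inv[OF e, of "1/3"] by auto
  define A where "A = {e::nat\<Rightarrow>bool. \<forall>i<k. e i = d i}"
  have Aoc: "open A" "closed A" using cyl_open_closed unfolding A_def by auto
  define K where "K = phi ` A"
  have KW: "K \<subseteq> W"
  proof
    fix y assume "y \<in> K"
    then obtain e where "e \<in> A" "y = phi e" unfolding K_def by auto
    then have "\<bar>phi e - phi d\<bar> \<le> 1 / 3 ^ k" using phi_close unfolding A_def by auto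
    then have "dist y x < \<epsilon>" using k \<open>y = phi e\<close> xd by (simp add: dist_real_def power_one_over)
    then show "y \<in> W" using eW \<open>y = phi e\<close> cantor_eq by auto
  qed
  have xK: "x \<in> K" unfolding K_def A_def xd by auto
  have Ksub: "K \<subseteq> cantor_set" unfolding K_def cantor_eq by auto
  have cK: "closedin (top_of_set cantor_set) K"
    using compact_phi_image[OF Aoc(2)] Ksub unfolding K_def
    by (simp add: closed_subset compact_imp_closed)
  have compl: "cantor_set - K = phi ` (- A)"
    unfolding K_def cantor_eq using phi_inj by (auto simp: inj_eq)
  have "closed (- A)" using Aoc(1) by (simp add: closed_Compl)
  then have "closed (phi ` (- A))" using compact_phi_image compact_imp_closed by blast
  then have "openin (top_of_set cantor_set) (cantor_set - (cantor_set - K))"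
    unfolding compl using \<open>closed (phi ` (- A))\<close>
    by (intro openin_diff) (auto simp: cantor_eq intro!: closed_subset)
  then have oK: "openin (top_of_set cantor_set) K" using Ksub by (simp add: double_diff)
  show "\<exists>U V. openin (top_of_set cantor_set) U \<and>
          (closedin (top_of_set cantor_set) V \<and> openin (top_of_set cantor_set) V) \<and> x \<in> U \<and> U \<subseteq> V \<and> V \<subseteq> W"
    using oK cK xK KW by blast
qed

lemma homeo_space: assumes "S homeomorphic T" shows "top_of_set S homeomorphic_space top_of_set T"
proof -
  obtain f g where h: "homeomorphism S T f g" using assms by (auto simp: homeomorphic_def)
  have "homeomorphic_maps (top_of_set S) (top_of_set T) f g"
    using h unfolding homeomorphism_def homeomorphic_maps_def
    by (auto simp: continuous_map_in_subtopology)
  then show ?thesis unfolding homeomorphic_space_def by blast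
qed

lemma clopen_base:
  assumes "top_of_set S dim_le 0" "x \<in> S" "\<delta> > 0"
  obtains K where "closedin (top_of_set S) K" "openin (top_of_set S) K" "x \<in> K" "K \<subseteq> ball x \<delta>"
proof -
  have "openin (top_of_set S) (S \<inter> ball x \<delta>) \<and> x \<in> S \<inter> ball x \<delta>"
    using assms by (auto simp: openin_open_Int)
  then obtain U V where "openin (top_of_set S) U" "closedin (top_of_set S) V \<and> openin (top_of_set S) V"
    "x \<in> U" "U \<subseteq> V" "V \<subseteq> S \<inter> ball x \<delta>"
    using assms(1) unfolding dimension_le_0_neighbourhood_base_of_clopen neighbourhood_base_of by meson
  then show ?thesis using that by blast
qed

lemma key:
  fixes C X Y :: "'a::metric_space set" and f :: "'a \<Rightarrow> 'a"
  assumes cC: "compact C" and dC: "top_of_set C dim_le 0"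
    and XC: "X \<subseteq> C" and fXY: "f ` X = Y"
    and LC: "clopen_LC (top_of_set X) (top_of_set Y) f"
    and n: "n \<ge> 1"
    and Kc: "closedin (top_of_set X) K" and Ko: "openin (top_of_set X) K"
    and xK: "x \<in> K"
  shows "\<exists>\<epsilon>>0. \<forall>z\<in>Y \<inter> closure (f ` bad_part C X Y f n). dist z (f x) < \<epsilon> \<longrightarrow> z \<in> f ` K"
proof (rule ccontr)
  define B where "B = bad_part C X Y f n"
  define Z where "Z = Y \<inter> closure (f ` B)"
  define y where "y = f x"
  assume neg: "\<not> ?thesis"
  then have neg': "\<And>\<epsilon>. \<epsilon> > 0 \<Longrightarrow> \<exists>z\<in>Z. dist z y < \<epsilon> \<and> z \<notin> f ` K"
    unfolding Z_def B_def y_def by auto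
  have KX: "K \<subseteq> X" using Ko openin_imp_subset by fastforce
  have BX: "B \<subseteq> X" unfolding B_def bad_part_def by auto
  have yY: "y \<in> Y" using xK KX fXY y_def by auto
  obtain V0 F0 where V0: "openin (top_of_set Y) V0" and F0: "closedin (top_of_set Y) F0"
    and fK: "f ` K = V0 \<inter> F0"
    using LC Kc Ko unfolding clopen_LC_def lc_set_def by blast
  have yV0: "y \<in> V0" using fK xK y_def by auto
  obtain \<epsilon>0 where e0: "\<epsilon>0 > 0" and e0V: "\<And>z. z \<in> Y \<Longrightarrow> dist z y < \<epsilon>0 \<Longrightarrow> z \<in> V0"
    using V0 yV0 by (force simp: openin_euclidean_subtopology_iff)
  have "\<exists>w. w \<in> f ` B \<and> w \<notin> f ` K \<and> dist w y < 1 / Suc j" for j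
  proof -
    have pos: "min \<epsilon>0 (1 / (2 * Suc j)) > 0" using e0 by simp
    obtain z where zZ: "z \<in> Z" and zd: "dist z y < min \<epsilon>0 (1 / (2 * Suc j))" and zK: "z \<notin> f ` K"
      using neg'[OF pos] by blast
    have zY: "z \<in> Y" using zZ Z_def by auto
    have "z \<in> V0" using e0V[OF zY] zd by simp
    then have zF: "z \<notin> F0" using zK fK by auto
    have "openin (top_of_set Y) (Y - F0)" using F0 by (simp add: openin_diff)
    then obtain \<rho> where rho: "\<rho> > 0" and rhoF: "\<And>w. w \<in> Y \<Longrightarrow> dist w z < \<rho> \<Longrightarrow> w \<notin> F0"
      using zY zF by (force simp: openin_euclidean_subtopology_iff)
    have pos2: "min \<rho> (1 / (2 * Suc j)) > 0" using rho by simp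
    have "z \<in> closure (f ` B)" using zZ Z_def by auto
    then obtain w where wB: "w \<in> f ` B" and wd: "dist w z < min \<rho> (1 / (2 * Suc j))"
      using pos2 unfolding closure_approachable by blast
    have wY: "w \<in> Y" using wB BX fXY by auto
    have "w \<notin> F0" using rhoF[OF wY] wd by simp
    then have "w \<notin> f ` K" using fK by auto
    moreover have "dist w y < 1 / Suc j"
    proof -
      have "dist w y \<le> dist w z + dist z y" by (rule dist_triangle)
      also have "\<dots> < 1 / (2 * Suc j) + 1 / (2 * Suc j)" using wd zd by simp
      also have "\<dots> = 1 / Suc j" by (simp add: field_simps)
      finally show ?thesis .
    qed
    ultimately show ?thesis using wB by blast
  qed
  then have "\<forall>j. \<exists>w. w \<in> f ` B \<and> w \<notin> f ` K \<and> dist w y < 1 / Suc j" by blast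
  from choice[OF this] obtain w where "\<forall>j. w j \<in> f ` B \<and> w j \<notin> f ` K \<and> dist (w j) y < 1 / Suc j"
    by blast
  then have wB: "\<And>j. w j \<in> f ` B" and wK: "\<And>j. w j \<notin> f ` K"
    and wd: "\<And>j. dist (w j) y < 1 / Suc j" by auto
  have wlim: "w \<longlonglongrightarrow> y"
    unfolding lim_sequentially
  proof (intro allI impI)
    fix r :: real assume "r > 0"
    then obtain N where N0: "inverse (real (Suc N)) < r" using reals_Archimedean by blast
    then have N: "1 / real (Suc N) < r" by (simp add: inverse_eq_divide)
    have "dist (w j) y < r" if "j \<ge> N" for j
    proof -
      have "real (Suc N) \<le> real (Suc j)" using that by simp
      then have "1 / real (Suc j) \<le> 1 / real (Suc N)"
        by (intro divide_left_mono) auto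
      then show ?thesis using wd[of j] N by linarith
    qed
    then show "\<exists>N. \<forall>n\<ge>N. dist (w n) y < r" by blast
  qed
  have ex0: "\<exists>xk xt. (\<forall>k. xk k \<in> X) \<and> (\<lambda>k. f (xk k)) \<longlonglongrightarrow> w j \<and> xt \<in> C \<and> xk \<longlonglongrightarrow> xt \<and>
        infdist xt {x \<in> X. f x = w j} > 1 / real n" for j
  proof -
    obtain b where b: "b \<in> B" "w j = f b" using wB[of j] by auto
    then obtain y' yk xk xt where "b \<in> X" "f b = y'" "(\<forall>k. yk k \<in> Y \<and> yk k \<noteq> y')" "yk \<longlonglongrightarrow> y'"
        "(\<forall>k. xk k \<in> X \<and> f (xk k) = yk k)" "xt \<in> C" "xk \<longlonglongrightarrow> xt"
        "infdist xt {x \<in> X. f x = y'} > 1 / real n"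
      unfolding B_def bad_part_def by blast
    then show ?thesis using b by (intro exI[of _ xk] exI[of _ xt]) auto
  qed
  have ex: "\<forall>j. \<exists>p. (\<forall>k. fst p k \<in> X) \<and> (\<lambda>k. f (fst p k)) \<longlonglongrightarrow> w j \<and> snd p \<in> C \<and> fst p \<longlonglongrightarrow> snd p \<and>
        infdist (snd p) {x \<in> X. f x = w j} > 1 / real n"
  proof
    fix j
    obtain xk xt where H: "(\<forall>k. xk k \<in> X) \<and> (\<lambda>k. f (xk k)) \<longlonglongrightarrow> w j \<and> xt \<in> C \<and> xk \<longlonglongrightarrow> xt \<and>
        infdist xt {x \<in> X. f x = w j} > 1 / real n" using ex0[of j] by blast
    show "\<exists>p. (\<forall>k. fst p k \<in> X) \<and> (\<lambda>k. f (fst p k)) \<longlonglongrightarrow> w j \<and> snd p \<in> C \<and> fst p \<longlonglongrightarrow> snd p \<and>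
        infdist (snd p) {x \<in> X. f x = w j} > 1 / real n"
      using H by (intro exI[of _ "(xk, xt)"]) simp
  qed
  obtain F where F: "\<forall>j. (\<forall>k. fst (F j) k \<in> X) \<and> (\<lambda>k. f (fst (F j) k)) \<longlonglongrightarrow> w j \<and> snd (F j) \<in> C \<and> fst (F j) \<longlonglongrightarrow> snd (F j) \<and>
        infdist (snd (F j)) {x \<in> X. f x = w j} > 1 / real n"
    using choice[OF ex] by blast
  define XK where "XK j = fst (F j)" for j
  define XT where "XT j = snd (F j)" for j
  have XKX: "\<And>j k. XK j k \<in> X" and XKlim: "\<And>j. (\<lambda>k. f (XK j k)) \<longlonglongrightarrow> w j"
    and XTC: "\<And>j. XT j \<in> C" and XTlim: "\<And>j. XK j \<longlonglongrightarrow> XT j"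
    and XTd: "\<And>j. infdist (XT j) {x \<in> X. f x = w j} > 1 / real n"
    using F unfolding XK_def XT_def by auto
  have "seq_compact C" using cC compact_imp_seq_compact by blast
  then obtain xt0 r where xt0: "xt0 \<in> C" and r: "strict_mono r" and rlim: "(XT \<circ> r) \<longlonglongrightarrow> xt0"
    unfolding seq_compact_def using XTC by blast
  define \<rho> where "\<rho> = 1 / (2 * real n)"
  have rho: "\<rho> > 0" using n by (simp add: \<rho>_def)
  obtain Q0 where Q0c: "closedin (top_of_set C) Q0" and Q0o: "openin (top_of_set C) Q0"
    and xtQ0: "xt0 \<in> Q0" and Q0b: "Q0 \<subseteq> ball xt0 \<rho>"
    using clopen_base[OF dC xt0 rho] by blast
  obtain Op where O: "open Op" and Q0O: "Q0 = C \<inter> Op" using Q0o by (auto simp: openin_open)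
  obtain G where G: "closed G" and Q0G: "Q0 = C \<inter> G" using Q0c by (auto simp: closedin_closed)
  define Q where "Q = X \<inter> Q0"
  have "Q = X \<inter> Op" unfolding Q_def Q0O using XC by auto
  then have Qo: "openin (top_of_set X) Q" using O by (simp add: openin_open_Int)
  have "Q = X \<inter> G" unfolding Q_def Q0G using XC by auto
  then have Qc: "closedin (top_of_set X) Q" using G by (simp add: closedin_closed_Int)
  obtain V1 F1 where V1: "openin (top_of_set Y) V1" and F1: "closedin (top_of_set Y) F1"
    and fKQ: "f ` (K \<union> Q) = V1 \<inter> F1"
    using LC openin_Un[OF Ko Qo] closedin_Un[OF Kc Qc] unfolding clopen_LC_def lc_set_def by blast
  have yV1: "y \<in> V1" using fKQ xK y_def by auto
  obtain \<epsilon>1 where e1: "\<epsilon>1 > 0" and e1V: "\<And>z. z \<in> Y \<Longrightarrow> dist z y < \<epsilon>1 \<Longrightarrow> z \<in> V1"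
    using V1 yV1 by (force simp: openin_euclidean_subtopology_iff)
  obtain G1 where G1: "closed G1" and F1G: "F1 = Y \<inter> G1" using F1 by (auto simp: closedin_closed)
  have ev1: "\<forall>\<^sub>F j in sequentially. dist (w (r j)) y < \<epsilon>1"
    using LIMSEQ_subseq_LIMSEQ[OF wlim r] e1 by (auto dest: tendstoD simp: o_def)
  have ev2: "\<forall>\<^sub>F j in sequentially. XT (r j) \<in> Op"
    using topological_tendstoD[OF rlim O] xtQ0 Q0O by (auto simp: o_def)
  have ev3: "\<forall>\<^sub>F j in sequentially. dist (XT (r j)) xt0 < \<rho>"
    using tendstoD[OF rlim rho] by (auto simp: o_def)
  obtain j where j1: "dist (w (r j)) y < \<epsilon>1" and j2: "XT (r j) \<in> Op" and j3: "dist (XT (r j)) xt0 < \<rho>"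
    using eventually_happens'[OF sequentially_bot eventually_conj[OF ev1 eventually_conj[OF ev2 ev3]]] by blast
  define m where "m = r j"
  have wY: "w m \<in> Y" using wB[of m] BX fXY by auto
  have wV1: "w m \<in> V1" using e1V[OF wY] j1 m_def by simp
  have evk: "\<forall>\<^sub>F k in sequentially. XK m k \<in> Op"
    using topological_tendstoD[OF XTlim[of m] O] j2 m_def by simp
  have "\<forall>\<^sub>F k in sequentially. f (XK m k) \<in> G1"
  proof (rule eventually_mono[OF evk])
    fix k assume "XK m k \<in> Op"
    then have "XK m k \<in> Q" unfolding Q_def Q0O using XKX XC by auto
    then have "f (XK m k) \<in> F1" using fKQ by auto
    then show "f (XK m k) \<in> G1" using F1G by auto
  qed
  then have "w m \<in> G1" using Lim_in_closed_set[OF G1 _ _ XKlim[of m]] by simp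
  then have "w m \<in> f ` (K \<union> Q)" using fKQ F1G wY wV1 by auto
  then obtain q where qQ: "q \<in> Q" and wq: "w m = f q" using wK[of m] by auto
  have "q \<in> {x \<in> X. f x = w m}" using qQ wq Q_def by auto
  then have "infdist (XT m) {x \<in> X. f x = w m} \<le> dist (XT m) q" by (rule infdist_le)
  also have "\<dots> \<le> dist (XT m) xt0 + dist xt0 q" by (rule dist_triangle)
  also have "\<dots> < \<rho> + \<rho>" using j3 m_def qQ Q_def Q0b by (auto intro!: add_strict_mono)
  also have "\<dots> = 1 / real n" by (simp add: \<rho>_def)
  finally show False using XTd[of m] by simp
qed

theorem lemma3:
  fixes C X Y :: "'a::metric_space set" and f :: "'a \<Rightarrow> 'a"
  assumes "C homeomorphic cantor_set"
    and "X \<subseteq> C" and "Y \<subseteq> C"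
    and "continuous_on X f" and "f ` X = Y"
    and "clopen_LC (top_of_set X) (top_of_set Y) f"
    and "\<forall>y\<in>Y. compact {x \<in> X. f x = y}"
    and "n \<ge> 1"
  shows "open_map (top_of_set {x \<in> X. f x \<in> Y \<inter> closure (f ` bad_part C X Y f n)})
                  (top_of_set (Y \<inter> closure (f ` bad_part C X Y f n))) f"
proof -
  define Z where "Z = Y \<inter> closure (f ` bad_part C X Y f n)"
  define W where "W = {x \<in> X. f x \<in> Z}"
  have cC: "compact C" using assms(1) compact_cantor homeomorphic_compactness by blast
  have dC: "top_of_set C dim_le 0"
    using homeomorphic_space_dimension_le[OF homeo_space[OF assms(1)]] cantor_dim0 by blast
  have dX: "top_of_set X dim_le 0"
  proof -
    have "subtopology (top_of_set C) X dim_le 0" by (rule dimension_le_subtopology[OF dC])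
    then show ?thesis using assms(2) by (simp add: subtopology_subtopology Int_absorb1)
  qed
  have "openin (top_of_set Z) (f ` U)" if U: "openin (top_of_set W) U" for U
  proof -
    have UW: "U \<subseteq> W" using U openin_imp_subset by fastforce
    have "\<exists>\<epsilon>>0. \<forall>z\<in>Z. dist z y < \<epsilon> \<longrightarrow> z \<in> f ` U" if yU: "y \<in> f ` U" for y
    proof -
      obtain x where xU: "x \<in> U" and yx: "y = f x" using yU by auto
      have xW: "x \<in> W" using xU UW by auto
      obtain \<delta> where d: "\<delta> > 0" and dU: "\<And>x'. x' \<in> W \<Longrightarrow> dist x' x < \<delta> \<Longrightarrow> x' \<in> U"
        using U xU by (force simp: openin_euclidean_subtopology_iff)
      have xX: "x \<in> X" using xW W_def by auto
      obtain K where Kc: "closedin (top_of_set X) K" and Ko: "openin (top_of_set X) K"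
        and xK: "x \<in> K" and Kb: "K \<subseteq> ball x \<delta>"
        using clopen_base[OF dX xX d] by blast
      have KX: "K \<subseteq> X" using Ko openin_imp_subset by fastforce
      obtain \<epsilon> where e: "\<epsilon> > 0" and eK: "\<forall>z\<in>Z. dist z (f x) < \<epsilon> \<longrightarrow> z \<in> f ` K"
        using key[OF cC dC assms(2) assms(5) assms(6) assms(8) Kc Ko xK] unfolding Z_def by blast
      have "\<forall>z\<in>Z. dist z y < \<epsilon> \<longrightarrow> z \<in> f ` U"
      proof (intro ballI impI)
        fix z assume zZ: "z \<in> Z" and "dist z y < \<epsilon>"
        then obtain k where kK: "k \<in> K" and zk: "z = f k" using eK yx by auto
        have "k \<in> W" using kK KX zZ zk W_def by auto
        moreover have "dist k x < \<delta>" using kK Kb by (auto simp: dist_commute)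
        ultimately show "z \<in> f ` U" using dU zk by auto
      qed
      then show ?thesis using e by blast
    qed
    moreover have "f ` U \<subseteq> Z" using UW W_def by auto
    ultimately show ?thesis by (auto simp: openin_euclidean_subtopology_iff)
  qed
  then show ?thesis unfolding open_map_def Z_def W_def by blast
qed

end
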